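(* Let $k$ be a commutative ring and $P$ an invertible $k$-module. Every $P$-Frobenius $k$-algebra $A$ is a QF algebra in the sense of Müller.
   Context: $P$ invertible means finitely generated projective of constant rank one. $A$ is $P$-Frobenius if it is finitely generated projective over $k$ and $A_A\cong\mathrm{Hom}_k(A,P)_A$ as right $A$-modules, where $(fa)(x)=f(ax)$. $A$ is QF in Müller's sense if it is finitely generated projective over $k$ and $A_A$ is isomorphic to a direct summand of a direct sum of $n$ copies of $A^*_A=\mathrm{Hom}_k(A,k)_A$ for some $n\ge1$. *)

theory Defs
  imports Complex_Main "HOL-Library.Function_Algebras"
begin

text \<open>Finitely generated projective: a direct summand of a free module k^n,
i.e. there is a k-linear split injection M -> k^n (with values supported in
indices below n) with a k-linear retraction.\<close>
definition fg_projective :: "('k::comm_ring_1 \<Rightarrow> 'm::ab_group_add \<Rightarrow> 'm) \<Rightarrow> bool" where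
  "fg_projective s \<longleftrightarrow> module s \<and>
     (\<exists>(n::nat) (i :: 'm::ab_group_add \<Rightarrow> nat \<Rightarrow> 'k::comm_ring_1) (p :: (nat \<Rightarrow> 'k) \<Rightarrow> 'm).
        module_hom s (\<lambda>c v j. c * v j) i \<and> module_hom (\<lambda>c v j. c * v j) s p \<and>
        (\<forall>m j. n \<le> j \<longrightarrow> i m j = 0) \<and> (\<forall>m. p (i m) = m))"

definition prime_ideal_of :: "'k::comm_ring_1 set \<Rightarrow> bool" where
  "prime_ideal_of I \<longleftrightarrow> 0 \<in> I \<and> (\<forall>a\<in>I. \<forall>b\<in>I. a + b \<in> I) \<and>
     (\<forall>a\<in>I. \<forall>r. r * a \<in> I) \<and> 1 \<notin> I \<and>
     (\<forall>a b. a * b \<in> I \<longrightarrow> a \<in> I \<or> b \<in> I)"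

text \<open>M_p is free of rank one over k_p (localisation at the prime p), written
out without constructing the localisation: there is x in M whose image x/1
generates M_p and has annihilator zero in k_p.\<close>
definition locally_rank_one_at ::
  "('k::comm_ring_1 \<Rightarrow> 'm::ab_group_add \<Rightarrow> 'm) \<Rightarrow> 'k set \<Rightarrow> bool" where
  "locally_rank_one_at s I \<longleftrightarrow>
     (\<exists>x. (\<forall>m. \<exists>t. t \<notin> I \<and> (\<exists>c. s t m = s c x)) \<and>
          (\<forall>c. s c x = 0 \<longrightarrow> (\<exists>v. v \<notin> I \<and> v * c = 0)))"

definition invertible_module :: "('k::comm_ring_1 \<Rightarrow> 'm::ab_group_add \<Rightarrow> 'm) \<Rightarrow> bool" where
  "invertible_module s \<longleftrightarrow> fg_projective s \<and>
     (\<forall>I. prime_ideal_of I \<longrightarrow> locally_rank_one_at s I)"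

definition k_algebra :: "('k::comm_ring_1 \<Rightarrow> 'a::ring_1 \<Rightarrow> 'a) \<Rightarrow> bool" where
  "k_algebra s \<longleftrightarrow> module s \<and>
     (\<forall>c x y. s c (x * y) = s c x * y \<and> s c (x * y) = x * s c y)"

text \<open>A is P-Frobenius: A f.g. projective over k and A_A isomorphic to
Hom_k(A,P)_A as right A-modules, where (f a)(x) = f (a x).\<close>
definition P_Frobenius ::
  "('k::comm_ring_1 \<Rightarrow> 'a::ring_1 \<Rightarrow> 'a) \<Rightarrow> ('k \<Rightarrow> 'p::ab_group_add \<Rightarrow> 'p) \<Rightarrow> bool" where
  "P_Frobenius sA sP \<longleftrightarrow> fg_projective sA \<and>
     (\<exists>\<phi> :: 'a::ring_1 \<Rightarrow> ('a \<Rightarrow> 'p::ab_group_add).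
        bij_betw \<phi> UNIV {f. module_hom sA sP f} \<and>
        (\<forall>x y. \<phi> (x + y) = (\<lambda>z. \<phi> x z + \<phi> y z)) \<and>
        (\<forall>x b. \<phi> (x * b) = (\<lambda>z. \<phi> x (b * z))))"

definition dual_space :: "('k::comm_ring_1 \<Rightarrow> 'a::ab_group_add \<Rightarrow> 'a) \<Rightarrow> ('a \<Rightarrow> 'k) set" where
  "dual_space sA = {f. module_hom sA ((*) :: 'k::comm_ring_1 \<Rightarrow> 'k \<Rightarrow> 'k) f}"

text \<open>Elements of the direct sum (A^* )^n, as n-indexed families (zero beyond n).\<close>
definition dual_sum :: "('k::comm_ring_1 \<Rightarrow> 'a::ab_group_add \<Rightarrow> 'a) \<Rightarrow> nat \<Rightarrow> (nat \<Rightarrow> 'a \<Rightarrow> 'k) set" where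
  "dual_sum sA n = {F. (\<forall>j<n. F j \<in> dual_space sA) \<and> (\<forall>j. n \<le> j \<longrightarrow> F j = 0)}"

text \<open>QF in Mueller's sense: A f.g. projective over k and A_A isomorphic to a
direct summand of (A^* )^n as right A-modules for some n >= 1, i.e. there is a
right A-linear split injection i : A -> (A^* )^n with right A-linear retraction p.
Right action on (A^* )^n: (F b) j = (\<lambda>x. F j (b * x)).\<close>
definition QF_Mueller :: "('k::comm_ring_1 \<Rightarrow> 'a::ring_1 \<Rightarrow> 'a) \<Rightarrow> bool" where
  "QF_Mueller sA \<longleftrightarrow> fg_projective sA \<and>
     (\<exists>(n::nat) (i :: 'a::ring_1 \<Rightarrow> nat \<Rightarrow> 'a \<Rightarrow> 'k::comm_ring_1) (p :: (nat \<Rightarrow> 'a \<Rightarrow> 'k) \<Rightarrow> 'a).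
        1 \<le> n \<and>
        (\<forall>a. i a \<in> dual_sum sA n) \<and>
        (\<forall>a a'. i (a + a') = (\<lambda>j x. i a j x + i a' j x)) \<and>
        (\<forall>a b. i (a * b) = (\<lambda>j x. i a j (b * x))) \<and>
        (\<forall>F\<in>dual_sum sA n. \<forall>G\<in>dual_sum sA n. p (\<lambda>j x. F j x + G j x) = p F + p G) \<and>
        (\<forall>F\<in>dual_sum sA n. \<forall>b. p (\<lambda>j x. F j (b * x)) = p F * b) \<and>
        (\<forall>a. p (i a) = a))"

end

theory Submission
  imports Defs
begin

lemma module_mult_self: "module ((*) :: 'k::comm_ring_1 \<Rightarrow> 'k \<Rightarrow> 'k)"
  by unfold_locales (auto simp: algebra_simps)

theorem proposition2p3:
  fixes sA :: "'k::comm_ring_1 \<Rightarrow> 'a::ring_1 \<Rightarrow> 'a"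
    and sP :: "'k \<Rightarrow> 'p::ab_group_add \<Rightarrow> 'p"
  assumes "k_algebra sA"
    and "invertible_module sP"
    and "P_Frobenius sA sP"
  shows "QF_Mueller sA"
proof -
  have fgA: "fg_projective sA" and modA: "module sA"
    using assms(3) by (auto simp: P_Frobenius_def fg_projective_def)
  obtain \<phi> :: "'a \<Rightarrow> 'a \<Rightarrow> 'p" where bij: "bij_betw \<phi> UNIV {f. module_hom sA sP f}"
    and phadd: "\<And>x y. \<phi> (x + y) = (\<lambda>z. \<phi> x z + \<phi> y z)"
    and phmul: "\<And>x b. \<phi> (x * b) = (\<lambda>z. \<phi> x (b * z))"
    using assms(3) unfolding P_Frobenius_def by blast
  have modP: "module sP" using assms(2) by (auto simp: invertible_module_def fg_projective_def)
  obtain n and iP :: "'p \<Rightarrow> nat \<Rightarrow> 'k" and pP :: "(nat \<Rightarrow> 'k) \<Rightarrow> 'p" where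
    hi: "module_hom sP (\<lambda>c v j. c * v j) iP" and hp: "module_hom (\<lambda>c v j. c * v j) sP pP"
    and sup: "\<And>m j. n \<le> j \<Longrightarrow> iP m j = 0" and ret: "\<And>m. pP (iP m) = m"
    using assms(2) unfolding invertible_module_def fg_projective_def by blast
  have ph_hom: "module_hom sA sP (\<phi> a)" for a using bij by (auto simp: bij_betw_def)
  have inj: "inj \<phi>" using bij by (auto simp: bij_betw_def)
  define \<psi> where "\<psi> = inv \<phi>"
  have psi_ph: "\<psi> (\<phi> a) = a" for a using inj by (simp add: \<psi>_def)
  have ph_psi: "module_hom sA sP f \<Longrightarrow> \<phi> (\<psi> f) = f" for f
    using bij unfolding \<psi>_def bij_betw_def by (auto intro: f_inv_into_f)
  have iPadd: "iP (x + y) j = iP x j + iP y j" for x y j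
    using module_hom.add[OF hi] by (simp add: plus_fun_def)
  have iPscale: "iP (sP c x) j = c * iP x j" for c x j
    using module_hom.scale[OF hi] by metis
  have pPadd: "pP (\<lambda>j. u j + v j) = pP u + pP v" for u v
    using module_hom.add[OF hp, of u v] by (simp add: plus_fun_def)
  have pPscale: "pP (\<lambda>j. c * u j) = sP c (pP u)" for c u
    using module_hom.scale[OF hp] by metis
  have Aadd: "\<phi> a (x + y) = \<phi> a x + \<phi> a y" for a x y using module_hom.add[OF ph_hom] by metis
  have Ascale: "\<phi> a (sA c x) = sP c (\<phi> a x)" for a c x using module_hom.scale[OF ph_hom] by metis
  define N where "N = Suc n"
  define i where "i = (\<lambda>a j x. iP (\<phi> a x) j)"
  define p where "p = (\<lambda>F. \<psi> (\<lambda>x. pP (\<lambda>j. F j x)))"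
  have dsF: "F \<in> dual_sum sA N \<Longrightarrow> module_hom sA (*) (F j)" for F j
    by (cases "j < N") (auto simp: dual_sum_def dual_space_def module_hom_iff modA module_mult_self)
  have Fadd: "F \<in> dual_sum sA N \<Longrightarrow> F j (x + y) = F j x + F j y" for F j x y
    using module_hom.add[OF dsF] by metis
  have Fscale: "F \<in> dual_sum sA N \<Longrightarrow> F j (sA c x) = c * F j x" for F j c x
    using module_hom.scale[OF dsF] by metis
  have homF: "F \<in> dual_sum sA N \<Longrightarrow> module_hom sA sP (\<lambda>x. pP (\<lambda>j. F j x))" for F
    by (auto simp: module_hom_iff modA modP Fadd Fscale pPadd pPscale)
  have i_ds: "i a \<in> dual_sum sA N" for a
    by (auto simp: dual_sum_def dual_space_def i_def N_def sup module_hom_iff modA module_mult_self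
        Aadd Ascale iPadd iPscale fun_eq_iff)
  have p_add: "p (\<lambda>j x. F j x + G j x) = p F + p G" if "F \<in> dual_sum sA N" "G \<in> dual_sum sA N" for F G
  proof -
    have "\<phi> (p F + p G) = (\<lambda>x. \<phi> (p F) x + \<phi> (p G) x)" by (rule phadd)
    also have "\<dots> = (\<lambda>x. pP (\<lambda>j. F j x) + pP (\<lambda>j. G j x))"
      unfolding p_def ph_psi[OF homF[OF that(1)]] ph_psi[OF homF[OF that(2)]] ..
    also have "\<dots> = (\<lambda>x. pP (\<lambda>j. F j x + G j x))" by (simp only: pPadd)
    finally have "\<phi> (p F + p G) = (\<lambda>x. pP (\<lambda>j. F j x + G j x))" .
    from arg_cong[where f=\<psi>, OF this] have "p F + p G = \<psi> (\<lambda>x. pP (\<lambda>j. F j x + G j x))"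
      by (simp only: psi_ph)
    moreover have "p (\<lambda>j x. F j x + G j x) = \<psi> (\<lambda>x. pP (\<lambda>j. F j x + G j x))" by (simp add: p_def)
    ultimately show ?thesis by simp
  qed
  have p_mul: "p (\<lambda>j x. F j (b * x)) = p F * b" if "F \<in> dual_sum sA N" for F b
  proof -
    have "\<phi> (p F * b) = (\<lambda>x. \<phi> (p F) (b * x))" by (rule phmul)
    also have "\<dots> = (\<lambda>x. pP (\<lambda>j. F j (b * x)))"
      unfolding p_def ph_psi[OF homF[OF that]] ..
    finally have "\<phi> (p F * b) = (\<lambda>x. pP (\<lambda>j. F j (b * x)))" .
    from arg_cong[where f=\<psi>, OF this] have "p F * b = \<psi> (\<lambda>x. pP (\<lambda>j. F j (b * x)))"
      by (simp only: psi_ph)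
    moreover have "p (\<lambda>j x. F j (b * x)) = \<psi> (\<lambda>x. pP (\<lambda>j. F j (b * x)))" by (simp add: p_def)
    ultimately show ?thesis by simp
  qed
  have p_i: "p (i a) = a" for a
  proof -
    have "(\<lambda>x. pP (\<lambda>j. i a j x)) = \<phi> a" by (simp add: i_def ret)
    then show ?thesis by (simp add: p_def psi_ph)
  qed
  show ?thesis unfolding QF_Mueller_def
    apply (rule conjI[OF fgA])
    apply (rule exI[of _ N], rule exI[of _ i], rule exI[of _ p])
    using i_ds p_add p_mul p_i
    by (auto simp: N_def i_def phadd phmul iPadd)
qed

end
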